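(* Let $(X,s)$ be a complete strong partial metric space, let $x_o\in X$, and let $f:X\to X$ be a Cauchy function at $x_o$. If $f$ is weakly orbitally continuous at $x_o$, then $f$ has a fixed point.
   Context: A strong partial metric on $X$ is $s:X\times X\to\mathbb{R}$ with, for all $x,y,z$: $s(x,x)<s(x,y)$ whenever $x\neq y$; $s(x,y)=s(y,x)$; $s(x,y)\le s(x,z)+s(z,y)-s(z,z)$. A point $a$ is a limit of $\{x_i\}$ iff for every $\epsilon>0$ there is $N$ with $s(a,x_i)-s(a,a)<\epsilon$ for all $i>N$ (convergence in the topology generated by the balls $\{y\mid s(x,y)-s(x,x)<\epsilon\}$). $\{x_i\}$ is Cauchy with central distance $r$ if for every $\epsilon>0$ there is $N$ with $|s(x_i,x_j)-r|<\epsilon$ for $i\ge j>N$; a special limit is a limit $a$ with $s(a,a)=r$; $(X,s)$ is complete if every Cauchy sequence has a special limit. $f$ is a Cauchy function at $x_o$ if the orbit $\{f^i(x_o)\}$ ($f^0(x_o)=x_o$, $f^{i+1}(x_o)=f(f^i(x_o))$) is Cauchy. $f$ is weakly orbitally continuous at $x_o$ if whenever $a$ is a special limit of $\{f^i(x_o)\}$, $f(a)$ is a limit of $\{f^i(x_o)\}$. *)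

theory Defs
  imports Main "HOL.Real"
begin

definition strong_partial_metric :: "('a \<Rightarrow> 'a \<Rightarrow> real) \<Rightarrow> bool" where
  "strong_partial_metric s \<longleftrightarrow>
     (\<forall>x y. x \<noteq> y \<longrightarrow> s x x < s x y) \<and>
     (\<forall>x y. s x y = s y x) \<and>
     (\<forall>x y z. s x y \<le> s x z + s z y - s z z)"

definition spm_limit :: "('a \<Rightarrow> 'a \<Rightarrow> real) \<Rightarrow> (nat \<Rightarrow> 'a) \<Rightarrow> 'a \<Rightarrow> bool" where
  "spm_limit s x a \<longleftrightarrow>
     (\<forall>\<epsilon>>0. \<exists>N. \<forall>i>N. s a (x i) - s a a < \<epsilon>)"

definition spm_cauchy :: "('a \<Rightarrow> 'a \<Rightarrow> real) \<Rightarrow> (nat \<Rightarrow> 'a) \<Rightarrow> real \<Rightarrow> bool" where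
  "spm_cauchy s x r \<longleftrightarrow>
     (\<forall>\<epsilon>>0. \<exists>N. \<forall>i j. i \<ge> j \<and> j > N \<longrightarrow> \<bar>s (x i) (x j) - r\<bar> < \<epsilon>)"

definition spm_special_limit :: "('a \<Rightarrow> 'a \<Rightarrow> real) \<Rightarrow> (nat \<Rightarrow> 'a) \<Rightarrow> real \<Rightarrow> 'a \<Rightarrow> bool" where
  "spm_special_limit s x r a \<longleftrightarrow> spm_limit s x a \<and> s a a = r"

definition spm_complete :: "('a \<Rightarrow> 'a \<Rightarrow> real) \<Rightarrow> bool" where
  "spm_complete s \<longleftrightarrow>
     (\<forall>x r. spm_cauchy s x r \<longrightarrow> (\<exists>a. spm_special_limit s x r a))"

definition orbit :: "('a \<Rightarrow> 'a) \<Rightarrow> 'a \<Rightarrow> nat \<Rightarrow> 'a" where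
  "orbit f x0 i = (f ^^ i) x0"

definition cauchy_function_at :: "('a \<Rightarrow> 'a \<Rightarrow> real) \<Rightarrow> ('a \<Rightarrow> 'a) \<Rightarrow> 'a \<Rightarrow> bool" where
  "cauchy_function_at s f x0 \<longleftrightarrow> (\<exists>r. spm_cauchy s (orbit f x0) r)"

definition weakly_orbitally_continuous_at :: "('a \<Rightarrow> 'a \<Rightarrow> real) \<Rightarrow> ('a \<Rightarrow> 'a) \<Rightarrow> 'a \<Rightarrow> bool" where
  "weakly_orbitally_continuous_at s f x0 \<longleftrightarrow>
     (\<forall>r a. spm_cauchy s (orbit f x0) r \<and> spm_special_limit s (orbit f x0) r a
        \<longrightarrow> spm_limit s (orbit f x0) (f a))"

end

theory Submission
  imports Defs
begin

theorem theorem7p13: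
  fixes s :: "'a \<Rightarrow> 'a \<Rightarrow> real" and f :: "'a \<Rightarrow> 'a" and x0 :: 'a
  assumes "strong_partial_metric s"
    and "spm_complete s"
    and "cauchy_function_at s f x0"
    and "weakly_orbitally_continuous_at s f x0"
  shows "\<exists>a. f a = a"
proof -
  let ?x = "orbit f x0"
  obtain r where c: "spm_cauchy s ?x r" using assms(3) unfolding cauchy_function_at_def by blast
  obtain a where sl: "spm_special_limit s ?x r a" using assms(2) c unfolding spm_complete_def by blast
  have la: "spm_limit s ?x a" and saa: "s a a = r" using sl unfolding spm_special_limit_def by auto
  have lb: "spm_limit s ?x (f a)" using assms(4) c sl unfolding weakly_orbitally_continuous_at_def by blast
  have sym: "\<And>x y. s x y = s y x" and tri: "\<And>x y z. s x y \<le> s x z + s z y - s z z"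
    and sp: "\<And>x y. x \<noteq> y \<Longrightarrow> s x x < s x y"
    using assms(1) unfolding strong_partial_metric_def by blast+
  have key: "s a (f a) < s (f a) (f a) + 3 * e" if e: "e > 0" for e
  proof -
    obtain N1 where N1: "\<forall>i>N1. s a (?x i) - s a a < e" using la e unfolding spm_limit_def by blast
    obtain N2 where N2: "\<forall>i>N2. s (f a) (?x i) - s (f a) (f a) < e" using lb e unfolding spm_limit_def by blast
    obtain N3 where N3: "\<forall>i j. i \<ge> j \<and> j > N3 \<longrightarrow> \<bar>s (?x i) (?x j) - r\<bar> < e"
      using c e unfolding spm_cauchy_def by blast
    define i where "i = N1 + N2 + N3 + 1"
    have h1: "s a (?x i) - s a a < e" using N1 i_def by auto
    have h2: "s (f a) (?x i) - s (f a) (f a) < e" using N2 i_def by auto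
    have h3: "\<bar>s (?x i) (?x i) - r\<bar> < e" using N3 i_def by auto
    have "s a (f a) \<le> s a (?x i) + s (?x i) (f a) - s (?x i) (?x i)" by (rule tri)
    then show ?thesis using h1 h2 h3 saa sym[of "?x i" "f a"] by linarith
  qed
  have "s a (f a) \<le> s (f a) (f a)"
  proof (rule ccontr)
    assume "\<not> ?thesis"
    then have "(s a (f a) - s (f a) (f a)) / 3 > 0" by simp
    from key[OF this] show False by (simp add: field_simps)
  qed
  then have "f a = a" using sp[of "f a" a] sym[of a "f a"] by force
  then show ?thesis by blast
qed

end
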